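(* Let $r,u$ be positive integers with $\min\{r,u\}>1$, $q$ a prime power, and $j$ a positive integer. If there exists a block totally nonsingular array $\mathbf{A}\in\mathrm{GL}(\mathbb{F}_q,j)^{r\times u}$, then $j\ge\lceil\max\{\log_q(r+1),\log_q(u+1)\}\rceil$.
   Context: $\mathrm{GL}(\mathbb{F},j)$ is the set of invertible $j\times j$ matrices over $\mathbb{F}$. An $r\times u$ block array $\mathbf{A}=[A_{i,k}]_{i\in[r],k\in[u]}$ with each $A_{i,k}\in\mathrm{GL}(\mathbb{F},j)$ is block totally nonsingular if for all $S\subseteq[r]$, $S'\subseteq[u]$ with $|S|=|S'|$, the $j|S|\times j|S'|$ matrix $[A_{i,k}]_{i\in S,k\in S'}$ is nonsingular. *)

theory Defs
  imports Complex_Main "Jordan_Normal_Form.Determinant"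
begin

definition in_GL :: "nat \<Rightarrow> 'a::field mat \<Rightarrow> bool" where
  "in_GL j M \<longleftrightarrow> M \<in> carrier_mat j j \<and> det M \<noteq> 0"

definition block_submatrix ::
  "nat \<Rightarrow> (nat \<Rightarrow> nat \<Rightarrow> 'a mat) \<Rightarrow> nat set \<Rightarrow> nat set \<Rightarrow> 'a mat" where
  "block_submatrix j A S S' =
     mat (j * card S) (j * card S')
       (\<lambda>(a, b). A (sorted_list_of_set S ! (a div j)) (sorted_list_of_set S' ! (b div j))
                  $$ (a mod j, b mod j))"

definition block_totally_nonsingular ::
  "nat \<Rightarrow> nat \<Rightarrow> nat \<Rightarrow> (nat \<Rightarrow> nat \<Rightarrow> 'a::field mat) \<Rightarrow> bool" where
  "block_totally_nonsingular j r u A \<longleftrightarrow>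
     (\<forall>i<r. \<forall>k<u. in_GL j (A i k)) \<and>
     (\<forall>S S'. S \<subseteq> {0..<r} \<longrightarrow> S' \<subseteq> {0..<u} \<longrightarrow> card S = card S' \<longrightarrow>
        det (block_submatrix j A S S') \<noteq> 0)"

end

theory Submission
  imports Defs
begin

lemma card_carrier_vec_le:
  "card (carrier_vec j :: ('a::finite) vec set) \<le> card (UNIV::'a set) ^ j"
proof -
  have inj: "inj_on list_of_vec (carrier_vec j :: 'a vec set)"
    by (metis inj_onI vec_list)
  have sub: "list_of_vec ` (carrier_vec j :: 'a vec set) \<subseteq> {xs. set xs \<subseteq> UNIV \<and> length xs = j}"
    by auto
  have fin: "finite {xs. set xs \<subseteq> (UNIV::'a set) \<and> length xs = j}"
    using finite_lists_length_eq[of "UNIV::'a set" j] by simp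
  have "card (carrier_vec j :: 'a vec set) = card (list_of_vec ` (carrier_vec j :: 'a vec set))"
    using card_image[OF inj] by simp
  also have "\<dots> \<le> card {xs. set xs \<subseteq> (UNIV::'a set) \<and> length xs = j}"
    by (rule card_mono[OF fin sub])
  also have "\<dots> = card (UNIV::'a set) ^ j" by (rule card_lists_length_eq) simp
  finally show ?thesis .
qed

lemma finite_carrier_vec: "finite (carrier_vec j :: ('a::finite) vec set)"
proof -
  have inj: "inj_on list_of_vec (carrier_vec j :: 'a vec set)"
    by (metis inj_onI vec_list)
  have sub: "list_of_vec ` (carrier_vec j :: 'a vec set) \<subseteq> {xs. set xs \<subseteq> UNIV \<and> length xs = j}"
    by auto
  have fin: "finite {xs. set xs \<subseteq> (UNIV::'a set) \<and> length xs = j}"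
    using finite_lists_length_eq[of "UNIV::'a set" j] by simp
  show ?thesis using finite_imageD[OF finite_subset[OF sub fin] inj] .
qed

lemma mat_vec_zero: "M \<in> carrier_mat n k \<Longrightarrow> M *\<^sub>v 0\<^sub>v k = 0\<^sub>v n"
  by (intro eq_vecI) (auto simp: mult_mat_vec_def row_def)

lemma core:
  fixes P Q :: "nat \<Rightarrow> ('a::{field,finite}) mat"
  assumes finI: "finite I" and j: "j > 0"
    and PQ: "\<forall>i\<in>I. P i \<in> carrier_mat j j \<and> Q i \<in> carrier_mat j j \<and> det (P i) \<noteq> 0 \<and> det (Q i) \<noteq> 0"
    and F: "\<forall>i\<in>I. \<forall>i'\<in>I. i < i' \<longrightarrow> det (four_block_mat (P i) (Q i) (P i') (Q i')) \<noteq> 0"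
  shows "card I + 1 \<le> card (UNIV::'a set) ^ j"
proof -
  define v :: "'a vec" where "v = vec j (\<lambda>_. 1)"
  define z :: "'a vec" where "z = vec j (\<lambda>_. -1)"
  have v: "v \<in> carrier_vec j" and z: "z \<in> carrier_vec j" unfolding v_def z_def by auto
  have vnz: "v \<noteq> 0\<^sub>v j"
  proof
    assume "v = 0\<^sub>v j" hence "v $ 0 = 0\<^sub>v j $ 0" by simp
    thus False using j unfolding v_def by simp
  qed
  have znz: "z \<noteq> 0\<^sub>v j"
  proof
    assume "z = 0\<^sub>v j" hence "z $ 0 = 0\<^sub>v j $ 0" by simp
    thus False using j unfolding z_def by simp
  qed
  have zv: "z + v = 0\<^sub>v j" unfolding z_def v_def by (rule eq_vecI) auto
  define Binv where "Binv i = (SOME B. B \<in> carrier_mat j j \<and> B * P i = 1\<^sub>m j)" for i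
  have Binv: "Binv i \<in> carrier_mat j j \<and> Binv i * P i = 1\<^sub>m j \<and> P i * Binv i = 1\<^sub>m j" if i: "i \<in> I" for i
  proof -
    from PQ i have Pc: "P i \<in> carrier_mat j j" and dP: "det (P i) \<noteq> 0" by auto
    from det_non_zero_imp_unit[OF Pc dP, unfolded Units_def, of "()"]
    obtain B where B: "B \<in> carrier_mat j j" and BA: "B * P i = 1\<^sub>m j"
      by (auto simp: ring_mat_def)
    have ex: "\<exists>B. B \<in> carrier_mat j j \<and> B * P i = 1\<^sub>m j" using B BA by blast
    have B1: "Binv i \<in> carrier_mat j j" and B2: "Binv i * P i = 1\<^sub>m j"
      using someI_ex[OF ex] unfolding Binv_def by auto
    have "P i * Binv i = 1\<^sub>m j"
      using mat_mult_left_right_inverse[OF B1 Pc B2] by simp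
    thus ?thesis using B1 B2 by simp
  qed
  define w where "w i = Binv i *\<^sub>v (Q i *\<^sub>v z)" for i
  have wc: "w i \<in> carrier_vec j" if "i \<in> I" for i
    using Binv[OF that] PQ that z unfolding w_def by auto
  have Pw: "P i *\<^sub>v w i = Q i *\<^sub>v z" if i: "i \<in> I" for i
  proof -
    have Pc: "P i \<in> carrier_mat j j" and Qc: "Q i \<in> carrier_mat j j" using PQ i by auto
    have "P i *\<^sub>v w i = (P i * Binv i) *\<^sub>v (Q i *\<^sub>v z)"
      unfolding w_def using Binv[OF i] Pc Qc z
      by (metis assoc_mult_mat_vec mult_mat_vec_carrier)
    also have "\<dots> = Q i *\<^sub>v z" using Binv[OF i] Qc z by simp
    finally show ?thesis .
  qed
  have wnz: "w i \<noteq> 0\<^sub>v j" if i: "i \<in> I" for i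
  proof
    assume w0: "w i = 0\<^sub>v j"
    have Pc: "P i \<in> carrier_mat j j" and Qc: "Q i \<in> carrier_mat j j" and dQ: "det (Q i) \<noteq> 0"
      using PQ i by auto
    have "P i *\<^sub>v 0\<^sub>v j = 0\<^sub>v j" using Pc by (rule mat_vec_zero)
    hence "Q i *\<^sub>v z = 0\<^sub>v j" using Pw[OF i] w0 by simp
    hence "det (Q i) = 0" using det_0_iff_vec_prod_zero[OF Qc] z znz by blast
    with dQ show False by simp
  qed
  have key: "w i \<noteq> w i'" if i: "i \<in> I" and i': "i' \<in> I" and lt: "i < i'" for i i'
  proof
    assume eq: "w i = w i'"
    have Pc: "P i \<in> carrier_mat j j" and Qc: "Q i \<in> carrier_mat j j"
      and Pc': "P i' \<in> carrier_mat j j" and Qc': "Q i' \<in> carrier_mat j j" using PQ i i' by auto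
    let ?M = "four_block_mat (P i) (Q i) (P i') (Q i')"
    have Mc: "?M \<in> carrier_mat (j + j) (j + j)" using four_block_carrier_mat[OF Pc Qc'] .
    let ?y = "w i @\<^sub>v v"
    have yc: "?y \<in> carrier_vec (j + j)" using wc[OF i] v by auto
    have ynz: "?y \<noteq> 0\<^sub>v (j + j)"
    proof
      assume "?y = 0\<^sub>v (j + j)"
      hence "?y $ j = 0\<^sub>v (j+j) $ j" by simp
      hence "v $ 0 = 0" using wc[OF i] v j by (simp add: index_append_vec)
      thus False unfolding v_def using j by simp
    qed
    have a: "P i *\<^sub>v w i + Q i *\<^sub>v v = 0\<^sub>v j"
      using Pw[OF i] mult_add_distrib_mat_vec[OF Qc z v] zv mat_vec_zero[OF Qc] by simp
    have b: "P i' *\<^sub>v w i + Q i' *\<^sub>v v = 0\<^sub>v j"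
      using Pw[OF i'] eq mult_add_distrib_mat_vec[OF Qc' z v] zv mat_vec_zero[OF Qc'] by simp
    have "?M *\<^sub>v ?y = 0\<^sub>v j @\<^sub>v 0\<^sub>v j"
      using four_block_mat_mult_vec[OF Pc Qc Pc' Qc' wc[OF i] v] a b by simp
    also have "\<dots> = 0\<^sub>v (j + j)" by (rule eq_vecI) (auto simp: index_append_vec)
    finally have "det ?M = 0" using det_0_iff_vec_prod_zero[OF Mc] yc ynz by blast
    thus False using F i i' lt by auto
  qed
  have inj: "inj_on w I"
  proof (rule inj_onI)
    fix i i' assume i: "i \<in> I" and i': "i' \<in> I" and eq: "w i = w i'"
    show "i = i'"
    proof (rule ccontr)
      assume "i \<noteq> i'"
      hence "i < i' \<or> i' < i" by arith
      thus False using key[OF i i'] key[OF i' i] eq by auto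
    qed
  qed
  have sub: "insert (0\<^sub>v j) (w ` I) \<subseteq> carrier_vec j" using wc by auto
  have notin: "0\<^sub>v j \<notin> w ` I" using wnz by (metis imageE)
  have c1: "card (insert (0\<^sub>v j) (w ` I)) = card I + 1"
    using card_insert_disjoint[OF _ notin] finI card_image[OF inj] by simp
  have c2: "card (insert (0\<^sub>v j) (w ` I)) \<le> card (carrier_vec j :: 'a vec set)"
    using card_mono[OF finite_carrier_vec sub] by simp
  show ?thesis using c1 c2 card_carrier_vec_le[where j=j and 'a='a] by linarith
qed

lemma sorted_pair: "(a::nat) < b \<Longrightarrow> sorted_list_of_set {a, b} = [a, b]"
  by simp

lemma div_mod_hi: "(x::nat) < 2 * j \<Longrightarrow> \<not> x < j \<Longrightarrow> x div j = 1 \<and> x mod j = x - j"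
  by (simp add: div_if mod_if)

lemma block_pair:
  assumes "a < b" "c < d"
    and "A a c \<in> carrier_mat j j" "A a d \<in> carrier_mat j j"
    "A b c \<in> carrier_mat j j" "A b d \<in> carrier_mat j j"
  shows "block_submatrix j A {a, b} {c, d} = four_block_mat (A a c) (A a d) (A b c) (A b d)"
proof (rule eq_matI)
  show "dim_row (block_submatrix j A {a, b} {c, d}) = dim_row (four_block_mat (A a c) (A a d) (A b c) (A b d))"
    using assms by (simp add: block_submatrix_def four_block_mat_def)
  show "dim_col (block_submatrix j A {a, b} {c, d}) = dim_col (four_block_mat (A a c) (A a d) (A b c) (A b d))"
    using assms by (simp add: block_submatrix_def four_block_mat_def)
  fix x y assume x: "x < dim_row (four_block_mat (A a c) (A a d) (A b c) (A b d))"
    and y: "y < dim_col (four_block_mat (A a c) (A a d) (A b c) (A b d))"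
  have x2: "x < 2 * j" and y2: "y < 2 * j" using x y assms by (auto simp: four_block_mat_def)
  show "block_submatrix j A {a, b} {c, d} $$ (x, y) = four_block_mat (A a c) (A a d) (A b c) (A b d) $$ (x, y)"
    using assms x2 y2 div_mod_hi[OF x2] div_mod_hi[OF y2]
    by (auto simp: block_submatrix_def four_block_mat_def sorted_pair)
qed


lemma final_arith:
  fixes r u j q :: nat
  assumes "q \<ge> 2" "r + 1 \<le> q ^ j" "u + 1 \<le> q ^ j"
  shows "int j \<ge> \<lceil>max (log (real q) (real (r + 1))) (log (real q) (real (u + 1)))\<rceil>"
proof -
  have q1: "1 < real q" using assms(1) by simp
  have hr: "real (r + 1) \<le> real (q ^ j)" using assms(2) by (simp only: of_nat_le_iff)
  have "log (real q) (real (r + 1)) \<le> log (real q) (real (q ^ j))"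
    using log_le_cancel_iff[OF q1, of "real (r+1)" "real (q^j)"] hr q1 by simp
  also have "\<dots> = real j" using q1 by (simp add: log_nat_power)
  finally have a: "log (real q) (real (r + 1)) \<le> real j" .
  have hu: "real (u + 1) \<le> real (q ^ j)" using assms(3) by (simp only: of_nat_le_iff)
  have "log (real q) (real (u + 1)) \<le> log (real q) (real (q ^ j))"
    using log_le_cancel_iff[OF q1, of "real (u+1)" "real (q^j)"] hu q1 by simp
  also have "\<dots> = real j" using q1 by (simp add: log_nat_power)
  finally have b: "log (real q) (real (u + 1)) \<le> real j" .
  show ?thesis using a b by (simp add: ceiling_le_iff)
qed

lemma card_field_ge2: "card (UNIV :: ('a::{field,finite}) set) \<ge> 2"
proof -
  have "card {0::'a, 1} = 2" by simp
  moreover have "card {0::'a, 1} \<le> card (UNIV :: 'a set)" by (rule card_mono) auto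
  ultimately show ?thesis by simp
qed

theorem mainTheorem11:
  fixes r u j q :: nat
  assumes "min r u > 1"
    and "card (UNIV :: 'a set) = q"
    and "j > 0"
    and "\<exists>A :: nat \<Rightarrow> nat \<Rightarrow> ('a::{field,finite}) mat. block_totally_nonsingular j r u A"
  shows "int j \<ge> \<lceil>max (log (real q) (real (r + 1))) (log (real q) (real (u + 1)))\<rceil>"
proof -
  obtain A :: "nat \<Rightarrow> nat \<Rightarrow> 'a mat" where A: "block_totally_nonsingular j r u A" using assms(4) by blast
  have GL: "A i k \<in> carrier_mat j j \<and> det (A i k) \<noteq> 0" if "i < r" "k < u" for i k
    using A that unfolding block_totally_nonsingular_def in_GL_def by auto
  have D: "det (block_submatrix j A S S') \<noteq> 0" if "S \<subseteq> {0..<r}" "S' \<subseteq> {0..<u}" "card S = card S'" for S S'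
    using A that unfolding block_totally_nonsingular_def by auto
  have r2: "r \<ge> 2" and u2: "u \<ge> 2" using assms(1) by auto
  have R: "card {0..<r} + 1 \<le> card (UNIV :: 'a set) ^ j"
  proof (rule core[where P="\<lambda>i. A i 0" and Q="\<lambda>i. A i 1"])
    show "finite {0..<r}" by simp
    show "0 < j" by fact
    show "\<forall>i\<in>{0..<r}. A i 0 \<in> carrier_mat j j \<and> A i 1 \<in> carrier_mat j j \<and> det (A i 0) \<noteq> 0 \<and> det (A i 1) \<noteq> 0"
      using GL u2 by auto
    show "\<forall>i\<in>{0..<r}. \<forall>i'\<in>{0..<r}. i < i' \<longrightarrow> det (four_block_mat (A i 0) (A i 1) (A i' 0) (A i' 1)) \<noteq> 0"
    proof (intro ballI impI)
      fix i i' assume i: "i \<in> {0..<r}" and i': "i' \<in> {0..<r}" and lt: "i < i'"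
      have "block_submatrix j A {i, i'} {0, 1} = four_block_mat (A i 0) (A i 1) (A i' 0) (A i' 1)"
        using GL i i' lt u2 by (intro block_pair) auto
      moreover have "det (block_submatrix j A {i, i'} {0, 1}) \<noteq> 0"
        using i i' lt u2 by (intro D) auto
      ultimately show "det (four_block_mat (A i 0) (A i 1) (A i' 0) (A i' 1)) \<noteq> 0" by simp
    qed
  qed
  have U: "card {0..<u} + 1 \<le> card (UNIV :: 'a set) ^ j"
  proof (rule core[where P="\<lambda>k. transpose_mat (A 0 k)" and Q="\<lambda>k. transpose_mat (A 1 k)"])
    show "finite {0..<u}" by simp
    show "0 < j" by fact
    show "\<forall>k\<in>{0..<u}. transpose_mat (A 0 k) \<in> carrier_mat j j \<and> transpose_mat (A 1 k) \<in> carrier_mat j j \<and> det (transpose_mat (A 0 k)) \<noteq> 0 \<and> det (transpose_mat (A 1 k)) \<noteq> 0"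
    proof
      fix k assume k: "k \<in> {0..<u}"
      have c0: "A 0 k \<in> carrier_mat j j" "det (A 0 k) \<noteq> 0" and c1: "A 1 k \<in> carrier_mat j j" "det (A 1 k) \<noteq> 0"
        using GL[of 0 k] GL[of 1 k] k r2 by auto
      show "transpose_mat (A 0 k) \<in> carrier_mat j j \<and> transpose_mat (A 1 k) \<in> carrier_mat j j \<and> det (transpose_mat (A 0 k)) \<noteq> 0 \<and> det (transpose_mat (A 1 k)) \<noteq> 0"
        using c0 c1 det_transpose[OF c0(1)] det_transpose[OF c1(1)] by auto
    qed
    show "\<forall>k\<in>{0..<u}. \<forall>k'\<in>{0..<u}. k < k' \<longrightarrow> det (four_block_mat (transpose_mat (A 0 k)) (transpose_mat (A 1 k)) (transpose_mat (A 0 k')) (transpose_mat (A 1 k'))) \<noteq> 0"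
    proof (intro ballI impI)
      fix k k' assume k: "k \<in> {0..<u}" and k': "k' \<in> {0..<u}" and lt: "k < k'"
      have c: "A 0 k \<in> carrier_mat j j" "A 0 k' \<in> carrier_mat j j" "A 1 k \<in> carrier_mat j j" "A 1 k' \<in> carrier_mat j j"
        using GL k k' r2 by auto
      have eq1: "block_submatrix j A {0, 1} {k, k'} = four_block_mat (A 0 k) (A 0 k') (A 1 k) (A 1 k')"
        using c lt by (intro block_pair) auto
      have eq2: "four_block_mat (transpose_mat (A 0 k)) (transpose_mat (A 1 k)) (transpose_mat (A 0 k')) (transpose_mat (A 1 k'))
          = transpose_mat (four_block_mat (A 0 k) (A 0 k') (A 1 k) (A 1 k'))"
        using transpose_four_block_mat[OF c(1) c(2) c(3) c(4)] by simp
      have Mc: "four_block_mat (A 0 k) (A 0 k') (A 1 k) (A 1 k') \<in> carrier_mat (j + j) (j + j)"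
        using four_block_carrier_mat[OF c(1) c(4)] .
      have "det (block_submatrix j A {0, 1} {k, k'}) \<noteq> 0"
        using k k' lt r2 by (intro D) auto
      thus "det (four_block_mat (transpose_mat (A 0 k)) (transpose_mat (A 1 k)) (transpose_mat (A 0 k')) (transpose_mat (A 1 k'))) \<noteq> 0"
        unfolding eq2 det_transpose[OF Mc] using eq1 by simp
    qed
  qed
  show ?thesis
    using final_arith[of q r j u] R U card_field_ge2[where 'a='a] assms(2) by simp
qed

end
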